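(* Let $\Omega\subset\mathbb R^d$ be a bounded Borel set, $f:\Omega\to[0,\infty)$ with $\int_\Omega f=1$, $p\ge1$, $x_1,x_2\in\Omega$, $h_1,h_2:[0,1]\to[0,\infty)$ continuous and non-decreasing, and $\kappa\in\mathbb N$, $\kappa\ge1$. Assume $G$ is Lipschitz with constant $L<\kappa$. Let $t_1,\dots,t_\kappa\in\mathbb R$ be arbitrary and define for $n\ge\kappa$ $$t_{n+1}=\frac1\kappa\sum_{m=n-\kappa+1}^nG(t_m),$$ and for $n>\kappa$ let $\psi_n(x)=0$ if $\tau(x)<t_n$ and $\psi_n(x)=1$ otherwise. Then $t_n\to\bar t$ and $\psi_n\to\bar\psi$ uniformly on every compact subset of $\Omega\setminus\{\tau=\bar t\}$.
   Context: $\tau(x)=|x-x_1|^p-|x-x_2|^p$, $m(t)=\int_{\{x\in\Omega:\tau(x)<t\}}f\,dx$, $G(t)=h_2(1-m(t))-h_1(m(t))$ (the difference between queue times at $x_2$ and $x_1$ when mass $m(t)$ goes to $x_1$). There is a unique $\bar t$ with $G(\bar t)=\bar t$, and $\bar\psi(x)=0$ if $\tau(x)<\bar t$, $\bar\psi(x)=1$ if $\tau(x)>\bar t$ (the unique equilibrium). *)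

theory Defs
  imports "HOL-Analysis.Analysis"
begin

definition tau :: "real \<Rightarrow> 'a::euclidean_space \<Rightarrow> 'a \<Rightarrow> 'a \<Rightarrow> real" where
  "tau p x1 x2 x = norm (x - x1) powr p - norm (x - x2) powr p"

definition mass :: "'a::euclidean_space set \<Rightarrow> ('a \<Rightarrow> real) \<Rightarrow> ('a \<Rightarrow> real) \<Rightarrow> real \<Rightarrow> real" where
  "mass \<Omega> f \<tau> t = (LINT x:{x\<in>\<Omega>. \<tau> x < t}|lebesgue. f x)"

definition Gfun :: "(real \<Rightarrow> real) \<Rightarrow> (real \<Rightarrow> real) \<Rightarrow> (real \<Rightarrow> real) \<Rightarrow> real \<Rightarrow> real" where
  "Gfun h1 h2 m t = h2 (1 - m t) - h1 (m t)"

end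

theory Submission
  imports Defs
begin

lemma seq_conv:
  fixes G :: "real \<Rightarrow> real" and t :: "nat \<Rightarrow> real" and \<kappa> :: nat
  assumes Gmono: "\<And>x y. x \<le> y \<Longrightarrow> G y \<le> G x"
    and Glip: "lipschitz_on L UNIV G"
    and \<kappa>: "\<kappa> \<ge> 1" and L_lt: "L < real \<kappa>"
    and tbar: "G tbar = tbar"
    and rec: "\<forall>n\<ge>\<kappa>. t (Suc n) = (\<Sum>m\<in>{n + 1 - \<kappa>..n}. G (t m)) / real \<kappa>"
  shows "t \<longlonglongrightarrow> tbar"
proof -
  define N0 where "N0 = Suc \<kappa>"
  define \<epsilon> where "\<epsilon> = 1 - L / real \<kappa>"
  have L0: "0 \<le> L" using Glip lipschitz_on_nonneg by blast
  have kpos: "real \<kappa> > 0" using \<kappa> by simp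
  have eps0: "0 < \<epsilon>" using L_lt kpos by (simp add: \<epsilon>_def field_simps)
  have eps1: "\<epsilon> \<le> 1" using L0 kpos by (simp add: \<epsilon>_def field_simps)
  have lipd: "\<bar>G x - G y\<bar> \<le> L * \<bar>x - y\<bar>" for x y
    using lipschitz_onD[OF Glip, of x y] by (simp add: dist_real_def)
  have diff: "t (Suc n) - t n = (G (t n) - G (t (n - \<kappa>))) / real \<kappa>" if n: "n \<ge> N0" for n
  proof -
    let ?g = "\<lambda>m. G (t m)"
    have r1: "t (Suc n) = sum ?g {n + 1 - \<kappa>..n} / real \<kappa>" using rec n by (simp add: N0_def)
    have r2: "t n = sum ?g {n - \<kappa>..n - 1} / real \<kappa>"
    proof -
      have "t (Suc (n - 1)) = sum ?g {n - 1 + 1 - \<kappa>..n - 1} / real \<kappa>"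
        using rec[rule_format, of "n - 1"] n by (simp add: N0_def)
      moreover have "Suc (n - 1) = n" "n - 1 + 1 - \<kappa> = n - \<kappa>" using n by (auto simp: N0_def)
      ultimately show ?thesis by simp
    qed
    have s1: "sum ?g {n - \<kappa>..n} = ?g (n - \<kappa>) + sum ?g {n + 1 - \<kappa>..n}"
    proof -
      have "sum ?g {n - \<kappa>..n} = ?g (n - \<kappa>) + sum ?g {Suc (n - \<kappa>)..n}"
        by (rule sum.atLeast_Suc_atMost) simp
      moreover have "Suc (n - \<kappa>) = n + 1 - \<kappa>" using n by (simp add: N0_def)
      ultimately show ?thesis by simp
    qed
    have s2: "sum ?g {n - \<kappa>..n} = sum ?g {n - \<kappa>..n - 1} + ?g n"
    proof -
      have "sum ?g {n - \<kappa>..Suc (n - 1)} = sum ?g {n - \<kappa>..n - 1} + ?g (Suc (n - 1))"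
        by (subst sum.cl_ivl_Suc) (use n in \<open>simp add: N0_def\<close>)
      moreover have "Suc (n - 1) = n" using n by (simp add: N0_def)
      ultimately show ?thesis by simp
    qed
    show ?thesis using r1 r2 s1 s2 kpos by (simp add: field_simps)
  qed
  have step_up: "B - t (Suc n) \<ge> \<epsilon> * (B - t n)"
    if n: "n \<ge> N0" and h1: "t n \<le> B" and h2: "t (n - \<kappa>) \<le> B" for n B
  proof -
    let ?d = "G (t n) - G (t (n - \<kappa>))"
    have e: "t (Suc n) = t n + ?d / real \<kappa>" using diff[OF n] by simp
    show ?thesis
    proof (cases "t (n - \<kappa>) \<ge> t n")
      case True
      have "?d \<le> L * (t (n - \<kappa>) - t n)" using lipd[of "t n" "t (n - \<kappa>)"] True by simp
      also have "\<dots> \<le> L * (B - t n)" using h2 L0 by (simp add: mult_left_mono)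
      finally have "?d / real \<kappa> \<le> L * (B - t n) / real \<kappa>" using kpos by (simp add: divide_right_mono)
      then show ?thesis using e by (simp add: \<epsilon>_def algebra_simps)
    next
      case False
      then have "?d \<le> 0" using Gmono[of "t (n - \<kappa>)" "t n"] by simp
      then have "?d / real \<kappa> \<le> 0" using kpos by (simp add: divide_nonpos_pos)
      moreover have "\<epsilon> * (B - t n) \<le> B - t n" by (rule mult_left_le_one_le) (use eps0 eps1 h1 in auto)
      ultimately show ?thesis using e by simp
    qed
  qed
  have step_lo: "t (Suc n) - A \<ge> \<epsilon> * (t n - A)"
    if n: "n \<ge> N0" and h1: "A \<le> t n" and h2: "A \<le> t (n - \<kappa>)" for n A
  proof -
    let ?d = "G (t n) - G (t (n - \<kappa>))"
    have e: "t (Suc n) = t n + ?d / real \<kappa>" using diff[OF n] by simp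
    show ?thesis
    proof (cases "t (n - \<kappa>) \<le> t n")
      case True
      have "- ?d \<le> L * (t n - t (n - \<kappa>))" using lipd[of "t n" "t (n - \<kappa>)"] True by simp
      also have "\<dots> \<le> L * (t n - A)" using h2 L0 by (simp add: mult_left_mono)
      finally have "- (L * (t n - A)) \<le> ?d" by linarith
      then have "- (L * (t n - A)) / real \<kappa> \<le> ?d / real \<kappa>" by (rule divide_right_mono) (use kpos in simp)
      moreover have "- (L * (t n - A)) / real \<kappa> = - (L / real \<kappa> * (t n - A))" by simp
      ultimately have X: "?d / real \<kappa> \<ge> - (L / real \<kappa> * (t n - A))" by simp
      have "\<epsilon> * (t n - A) = (t n - A) - L / real \<kappa> * (t n - A)" by (simp add: \<epsilon>_def algebra_simps)
      then show ?thesis using e X by linarith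
    next
      case False
      then have "?d \<ge> 0" using Gmono[of "t n" "t (n - \<kappa>)"] by simp
      then have "?d / real \<kappa> \<ge> 0" using kpos by simp
      moreover have "\<epsilon> * (t n - A) \<le> t n - A" by (rule mult_left_le_one_le) (use eps0 eps1 h1 in auto)
      ultimately show ?thesis using e by simp
    qed
  qed
  define b where "b n = Max (t ` {n - \<kappa>..n})" for n
  define a where "a n = Min (t ` {n - \<kappa>..n})" for n
  have bge: "t m \<le> b n" if "m \<in> {n - \<kappa>..n}" for m n
    unfolding b_def using that by (intro Max_ge) auto
  have ale: "a n \<le> t m" if "m \<in> {n - \<kappa>..n}" for m n
    unfolding a_def using that by (intro Min_le) auto
  have bex: "\<exists>m\<in>{n - \<kappa>..n}. b n = t m" for n
  proof -
    have "b n \<in> t ` {n - \<kappa>..n}" unfolding b_def by (intro Max_in) auto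
    then show ?thesis by auto
  qed
  have aex: "\<exists>m\<in>{n - \<kappa>..n}. a n = t m" for n
  proof -
    have "a n \<in> t ` {n - \<kappa>..n}" unfolding a_def by (intro Min_in) auto
    then show ?thesis by auto
  qed
  have ball: "t j \<le> b n" if n: "n \<ge> N0" and j: "n - \<kappa> \<le> j" for n j
    using j
  proof (induction j rule: less_induct)
    case (less j)
    show ?case
    proof (cases "j \<le> n")
      case True then show ?thesis using less.prems bge by auto
    next
      case False
      then obtain i where i: "j = Suc i" "i \<ge> n" by (cases j) auto
      have "t i \<le> b n" using less.IH[of i] i less.prems by auto
      moreover have "t (i - \<kappa>) \<le> b n" using less.IH[of "i - \<kappa>"] i less.prems by auto
      ultimately have "b n - t (Suc i) \<ge> \<epsilon> * (b n - t i)" using step_up[of i "b n"] i n by auto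
      moreover have "\<epsilon> * (b n - t i) \<ge> 0" using eps0 \<open>t i \<le> b n\<close> by simp
      ultimately show ?thesis using i by simp
    qed
  qed
  have aall: "a n \<le> t j" if n: "n \<ge> N0" and j: "n - \<kappa> \<le> j" for n j
    using j
  proof (induction j rule: less_induct)
    case (less j)
    show ?case
    proof (cases "j \<le> n")
      case True then show ?thesis using less.prems ale by auto
    next
      case False
      then obtain i where i: "j = Suc i" "i \<ge> n" by (cases j) auto
      have "a n \<le> t i" using less.IH[of i] i less.prems by auto
      moreover have "a n \<le> t (i - \<kappa>)" using less.IH[of "i - \<kappa>"] i less.prems by auto
      ultimately have "t (Suc i) - a n \<ge> \<epsilon> * (t i - a n)" using step_lo[of i "a n"] i n by auto
      moreover have "\<epsilon> * (t i - a n) \<ge> 0" using eps0 \<open>a n \<le> t i\<close> by simp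
      ultimately show ?thesis using i by simp
    qed
  qed
  have bmono: "b m \<le> b n" if "n \<ge> N0" "m \<ge> n" for m n
    using bex[of m] ball[OF that(1)] that(2) by force
  have amono: "a n \<le> a m" if "n \<ge> N0" "m \<ge> n" for m n
    using aex[of m] aall[OF that(1)] that(2) by force
  have atb: "a n \<le> t n" "t n \<le> b n" for n using ale bge by auto
  have iter_up: "b n - t (n + j) \<ge> \<epsilon> ^ j * (b n - t n)" if n: "n \<ge> N0" for n j
  proof (induction j)
    case 0 then show ?case by simp
  next
    case (Suc j)
    have "t (n + j) \<le> b n" using ball[OF n] by simp
    moreover have "t (n + j - \<kappa>) \<le> b n" using ball[OF n] by simp
    ultimately have "b n - t (Suc (n + j)) \<ge> \<epsilon> * (b n - t (n + j))"
      using step_up[of "n + j" "b n"] n by simp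
    moreover have "\<epsilon> * (b n - t (n + j)) \<ge> \<epsilon> * (\<epsilon> ^ j * (b n - t n))"
      using Suc.IH eps0 by (simp add: mult_left_mono)
    ultimately show ?case by simp
  qed
  have iter_lo: "t (n + j) - a n \<ge> \<epsilon> ^ j * (t n - a n)" if n: "n \<ge> N0" for n j
  proof (induction j)
    case 0 then show ?case by simp
  next
    case (Suc j)
    have "a n \<le> t (n + j)" using aall[OF n] by simp
    moreover have "a n \<le> t (n + j - \<kappa>)" using aall[OF n] by simp
    ultimately have "t (Suc (n + j)) - a n \<ge> \<epsilon> * (t (n + j) - a n)"
      using step_lo[of "n + j" "a n"] n by simp
    moreover have "\<epsilon> * (t (n + j) - a n) \<ge> \<epsilon> * (\<epsilon> ^ j * (t n - a n))"
      using Suc.IH eps0 by (simp add: mult_left_mono)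
    ultimately show ?case by simp
  qed
  have jump_up: "b (n + Suc \<kappa>) \<le> b n - \<epsilon> ^ Suc \<kappa> * (b n - t n)" if n: "n \<ge> N0" for n
  proof -
    obtain m where m: "m \<in> {n + Suc \<kappa> - \<kappa>..n + Suc \<kappa>}" "b (n + Suc \<kappa>) = t m" using bex by blast
    define i where "i = m - n"
    have mi: "m = n + i" "i \<le> Suc \<kappa>" using m(1) by (auto simp: i_def)
    have "\<epsilon> ^ Suc \<kappa> \<le> \<epsilon> ^ i" using mi(2) eps0 eps1 by (intro power_decreasing) auto
    then have "\<epsilon> ^ Suc \<kappa> * (b n - t n) \<le> \<epsilon> ^ i * (b n - t n)"
      using atb[of n] by (intro mult_right_mono) auto
    then show ?thesis using iter_up[OF n, of i] m(2) mi(1) by simp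
  qed
  have jump_lo: "a (n + Suc \<kappa>) \<ge> a n + \<epsilon> ^ Suc \<kappa> * (t n - a n)" if n: "n \<ge> N0" for n
  proof -
    obtain m where m: "m \<in> {n + Suc \<kappa> - \<kappa>..n + Suc \<kappa>}" "a (n + Suc \<kappa>) = t m" using aex by blast
    define i where "i = m - n"
    have mi: "m = n + i" "i \<le> Suc \<kappa>" using m(1) by (auto simp: i_def)
    have "\<epsilon> ^ Suc \<kappa> \<le> \<epsilon> ^ i" using mi(2) eps0 eps1 by (intro power_decreasing) auto
    then have "\<epsilon> ^ Suc \<kappa> * (t n - a n) \<le> \<epsilon> ^ i * (t n - a n)"
      using atb[of n] by (intro mult_right_mono) auto
    then show ?thesis using iter_lo[OF n, of i] m(2) mi(1) by simp
  qed
  define B where "B k = b (N0 + k)" for k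
  define A where "A k = a (N0 + k)" for k
  have decB: "decseq B" unfolding decseq_def B_def by (auto intro: bmono)
  have incA: "incseq A" unfolding incseq_def A_def by (auto intro: amono)
  have AB: "A k \<le> B k" for k unfolding A_def B_def using atb[of "N0 + k"] by linarith
  have Blow: "\<forall>k. A 0 \<le> B k" using incA AB by (metis incseq_def le0 order.trans)
  obtain \<beta> where \<beta>: "B \<longlonglongrightarrow> \<beta>" "\<forall>k. \<beta> \<le> B k" by (rule decseq_convergent[OF decB Blow])
  have Aup: "\<forall>k. A k \<le> B 0" using decB AB by (metis decseq_def le0 order.trans)
  obtain \<alpha> where \<alpha>: "A \<longlonglongrightarrow> \<alpha>" "\<forall>k. A k \<le> \<alpha>" by (rule incseq_convergent[OF incA Aup])
  have ab: "\<alpha> \<le> \<beta>" using LIMSEQ_le[OF \<alpha>(1) \<beta>(1)] AB by blast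
  have eq: "\<alpha> = \<beta>"
  proof (rule ccontr)
    assume "\<alpha> \<noteq> \<beta>"
    with ab have lt: "\<alpha> < \<beta>" by simp
    define c where "c = \<epsilon> ^ Suc \<kappa> * (\<beta> - \<alpha>) / 2"
    have c0: "c > 0" using lt eps0 by (simp add: c_def)
    obtain K1 where K1: "\<forall>k\<ge>K1. norm (B k - \<beta>) < c" using \<beta>(1) c0 LIMSEQ_iff by blast
    obtain K2 where K2: "\<forall>k\<ge>K2. norm (A k - \<alpha>) < c" using \<alpha>(1) c0 LIMSEQ_iff by blast
    define k where "k = max K1 K2"
    define n where "n = N0 + k"
    have n: "n \<ge> N0" by (simp add: n_def)
    have kK: "K1 \<le> k" "K2 \<le> k" by (simp_all add: k_def)
    have bn: "b n < \<beta> + c" using K1[rule_format, OF kK(1)] by (simp add: n_def B_def abs_less_iff)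
    have an: "a n > \<alpha> - c" using K2[rule_format, OF kK(2)] by (simp add: n_def A_def abs_less_iff)
    have bn2: "b (n + Suc \<kappa>) \<ge> \<beta>" using \<beta>(2)[rule_format, of "k + Suc \<kappa>"] by (simp add: B_def n_def add.assoc)
    have an2: "a (n + Suc \<kappa>) \<le> \<alpha>" using \<alpha>(2)[rule_format, of "k + Suc \<kappa>"] by (simp add: A_def n_def add.assoc)
    have bb: "b n \<ge> \<beta>" using \<beta>(2)[rule_format, of k] by (simp add: B_def n_def)
    have aa: "a n \<le> \<alpha>" using \<alpha>(2)[rule_format, of k] by (simp add: A_def n_def)
    have epos: "\<epsilon> ^ Suc \<kappa> \<ge> 0" using eps0 by simp
    show False
    proof (cases "t n \<le> (\<alpha> + \<beta>) / 2")
      case True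
      then have "b n - t n \<ge> (\<beta> - \<alpha>) / 2" using bb by simp
      then have "\<epsilon> ^ Suc \<kappa> * (b n - t n) \<ge> \<epsilon> ^ Suc \<kappa> * ((\<beta> - \<alpha>) / 2)"
        using epos by (rule mult_left_mono)
      then have "\<epsilon> ^ Suc \<kappa> * (b n - t n) \<ge> c" by (simp add: c_def)
      then show False using jump_up[OF n] bn bn2 by linarith
    next
      case False
      then have "t n - a n \<ge> (\<beta> - \<alpha>) / 2" using aa by simp
      then have "\<epsilon> ^ Suc \<kappa> * (t n - a n) \<ge> \<epsilon> ^ Suc \<kappa> * ((\<beta> - \<alpha>) / 2)"
        using epos by (rule mult_left_mono)
      then have "\<epsilon> ^ Suc \<kappa> * (t n - a n) \<ge> c" by (simp add: c_def)
      then show False using jump_lo[OF n] an an2 by linarith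
    qed
  qed
  have tlim: "t \<longlonglongrightarrow> \<beta>"
  proof (rule LIMSEQ_offset[where k = N0])
    have h1: "\<forall>k. A k \<le> t (k + N0)" using atb by (simp add: A_def add.commute)
    have h2: "\<forall>k. t (k + N0) \<le> B k" using atb by (simp add: B_def add.commute)
    have e1: "eventually (\<lambda>k. A k \<le> t (k + N0)) sequentially" using h1 by (rule always_eventually)
    have e2: "eventually (\<lambda>k. t (k + N0) \<le> B k) sequentially" using h2 by (rule always_eventually)
    have aL: "A \<longlonglongrightarrow> \<beta>" using \<alpha>(1) eq by simp
    show "(\<lambda>k. t (k + N0)) \<longlonglongrightarrow> \<beta>" by (rule tendsto_sandwich[OF e1 e2 aL \<beta>(1)])
  qed
  have Gcont: "isCont G x" for x
    using lipschitz_on_continuous_on[OF Glip] continuous_on_eq_continuous_at[of UNIV G] by auto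
  have bounds: "G (B k) \<le> t (k + Suc N0) \<and> t (k + Suc N0) \<le> G (A k)" for k
  proof -
    define n where "n = N0 + k"
    have n: "n \<ge> \<kappa>" by (simp add: n_def N0_def)
    have r: "t (Suc n) = (\<Sum>m\<in>{n + 1 - \<kappa>..n}. G (t m)) / real \<kappa>" using rec n by simp
    have card: "card {n + 1 - \<kappa>..n} = \<kappa>" using n \<kappa> by simp
    have sub: "m \<in> {n - \<kappa>..n}" if "m \<in> {n + 1 - \<kappa>..n}" for m using that by auto
    have "(\<Sum>m\<in>{n + 1 - \<kappa>..n}. G (t m)) \<le> of_nat \<kappa> * G (a n)"
      using sum_bounded_above[of "{n + 1 - \<kappa>..n}" "\<lambda>m. G (t m)" "G (a n)"] card
        Gmono ale sub by auto
    moreover have "of_nat \<kappa> * G (b n) \<le> (\<Sum>m\<in>{n + 1 - \<kappa>..n}. G (t m))"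
      using sum_bounded_below[of "{n + 1 - \<kappa>..n}" "G (b n)" "\<lambda>m. G (t m)"] card
        Gmono bge sub by auto
    moreover have "real \<kappa> * t (Suc n) = (\<Sum>m\<in>{n + 1 - \<kappa>..n}. G (t m))" using r kpos by simp
    ultimately have "real \<kappa> * G (b n) \<le> real \<kappa> * t (Suc n)" "real \<kappa> * t (Suc n) \<le> real \<kappa> * G (a n)"
      by linarith+
    then have "G (b n) \<le> t (Suc n) \<and> t (Suc n) \<le> G (a n)"
      using kpos by (simp add: mult_le_cancel_left_pos)
    then show ?thesis by (simp add: n_def A_def B_def add.commute)
  qed
  have l1: "(\<lambda>k. t (k + Suc N0)) \<longlonglongrightarrow> \<beta>" using LIMSEQ_ignore_initial_segment[OF tlim] .
  have l2: "(\<lambda>k. G (B k)) \<longlonglongrightarrow> G \<beta>" using isCont_tendsto_compose[OF Gcont \<beta>(1)] .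
  have l3: "(\<lambda>k. G (A k)) \<longlonglongrightarrow> G \<beta>" using isCont_tendsto_compose[OF Gcont \<alpha>(1)] eq by simp
  have "G \<beta> \<le> \<beta>" using LIMSEQ_le[OF l2 l1] bounds by blast
  moreover have "\<beta> \<le> G \<beta>" using LIMSEQ_le[OF l1 l3] bounds by blast
  ultimately have fixb: "G \<beta> = \<beta>" by simp
  have "\<beta> = tbar"
  proof (rule ccontr)
    assume "\<beta> \<noteq> tbar"
    then consider "\<beta> < tbar" | "tbar < \<beta>" by linarith
    then show False
    proof cases
      case 1 then show False using Gmono[of \<beta> tbar] fixb tbar by simp
    next
      case 2 then show False using Gmono[of tbar \<beta>] fixb tbar by simp
    qed
  qed
  then show ?thesis using tlim by simp
qed
theorem theorem5p9:
  fixes \<Omega> :: "'a::euclidean_space set" and f :: "'a \<Rightarrow> real"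
    and p :: real and x1 x2 :: 'a and h1 h2 :: "real \<Rightarrow> real"
    and \<kappa> :: nat and L :: real and t :: "nat \<Rightarrow> real" and tbar :: real
  assumes \<Omega>_borel: "\<Omega> \<in> sets borel" and \<Omega>_bdd: "bounded \<Omega>"
    and f_nonneg: "\<forall>x\<in>\<Omega>. 0 \<le> f x"
    and f_int: "set_integrable lebesgue \<Omega> f"
    and f_one: "(LINT x:\<Omega>|lebesgue. f x) = 1"
    and p: "p \<ge> 1"
    and x1: "x1 \<in> \<Omega>" and x2: "x2 \<in> \<Omega>"
    and h1_cont: "continuous_on {0..1} h1" and h1_mono: "mono_on {0..1} h1"
    and h1_nonneg: "\<forall>s\<in>{0..1}. 0 \<le> h1 s"
    and h2_cont: "continuous_on {0..1} h2" and h2_mono: "mono_on {0..1} h2"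
    and h2_nonneg: "\<forall>s\<in>{0..1}. 0 \<le> h2 s"
    and \<kappa>: "\<kappa> \<ge> 1"
    and G_lip: "lipschitz_on L UNIV (Gfun h1 h2 (mass \<Omega> f (tau p x1 x2)))"
    and L_lt: "L < real \<kappa>"
    and tbar: "Gfun h1 h2 (mass \<Omega> f (tau p x1 x2)) tbar = tbar"
    and rec: "\<forall>n\<ge>\<kappa>. t (Suc n) =
       (\<Sum>m\<in>{n + 1 - \<kappa>..n}. Gfun h1 h2 (mass \<Omega> f (tau p x1 x2)) (t m)) / real \<kappa>"
  shows "t \<longlonglongrightarrow> tbar \<and>
    (\<forall>K. compact K \<and> K \<subseteq> \<Omega> - {x. tau p x1 x2 x = tbar} \<longrightarrow>
       uniform_limit K
         (\<lambda>n x. if tau p x1 x2 x < t n then (0::real) else 1)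
         (\<lambda>x. if tau p x1 x2 x < tbar then 0 else 1) sequentially)"
proof -
  let ?\<tau> = "tau p x1 x2"
  let ?m = "mass \<Omega> f ?\<tau>"
  let ?G = "Gfun h1 h2 ?m"
  have p0: "p > 0" using p by simp
  have tcont: "continuous_on UNIV ?\<tau>"
  proof -
    have c: "continuous_on UNIV (\<lambda>x. norm (x - y) powr p)" for y :: 'a
      by (rule continuous_on_powr') (use p0 in \<open>auto intro!: continuous_intros\<close>)
    show ?thesis unfolding tau_def by (intro continuous_on_diff c)
  qed
  have Sset: "{x\<in>\<Omega>. ?\<tau> x < s} \<in> sets lebesgue" for s
  proof -
    have "open {x. ?\<tau> x < s}" by (rule open_Collect_less[OF tcont]) simp
    then have "{x. ?\<tau> x < s} \<in> sets borel" by simp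
    then have "\<Omega> \<inter> {x. ?\<tau> x < s} \<in> sets borel" using \<Omega>_borel by auto
    moreover have "sets borel \<subseteq> sets lebesgue" by force
    moreover have "{x\<in>\<Omega>. ?\<tau> x < s} = \<Omega> \<inter> {x. ?\<tau> x < s}" by auto
    ultimately show ?thesis by auto
  qed
  have \<Omega>leb: "\<Omega> \<in> sets lebesgue" using \<Omega>_borel by force
  have setmono: "(LINT x:A|lebesgue. f x) \<le> (LINT x:B|lebesgue. f x)"
    if AB: "A \<subseteq> B" "B \<subseteq> \<Omega>" and AS: "A \<in> sets lebesgue" and BS: "B \<in> sets lebesgue" for A B
  proof -
    have iA: "set_integrable lebesgue A f" using set_integrable_subset[OF f_int AS] AB by auto
    have iB: "set_integrable lebesgue B f" using set_integrable_subset[OF f_int BS] AB by auto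
    show ?thesis unfolding set_lebesgue_integral_def
      using iA iB unfolding set_integrable_def
      by (rule integral_mono) (use AB f_nonneg in \<open>auto split: split_indicator\<close>)
  qed
  have mmono: "?m s \<le> ?m s'" if "s \<le> s'" for s s'
    unfolding mass_def using that by (intro setmono Sset) auto
  have m0: "0 \<le> ?m s" for s
  proof -
    have "(LINT x:{}|lebesgue. f x) \<le> ?m s" unfolding mass_def by (intro setmono Sset) auto
    then show ?thesis by (simp add: set_lebesgue_integral_def)
  qed
  have m1: "?m s \<le> 1" for s
    unfolding mass_def f_one[symmetric] by (intro setmono Sset \<Omega>leb) auto
  have Gmono: "?G y \<le> ?G x" if "x \<le> y" for x y
  proof -
    have a: "h1 (?m x) \<le> h1 (?m y)"
      using h1_mono m0 m1 mmono[OF that] by (intro mono_onD[OF h1_mono]) auto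
    have b: "h2 (1 - ?m y) \<le> h2 (1 - ?m x)"
      using h2_mono m0 m1 mmono[OF that] by (intro mono_onD[OF h2_mono]) auto
    show ?thesis using a b by (simp add: Gfun_def)
  qed
  have tlim: "t \<longlonglongrightarrow> tbar"
    by (rule seq_conv[OF Gmono G_lip \<kappa> L_lt tbar rec])
  have unif: "uniform_limit K (\<lambda>n x. if ?\<tau> x < t n then (0::real) else 1)
         (\<lambda>x. if ?\<tau> x < tbar then 0 else 1) sequentially"
    if K: "compact K" "K \<subseteq> \<Omega> - {x. ?\<tau> x = tbar}" for K
  proof (cases "K = {}")
    case True then show ?thesis by (simp add: uniform_limit_iff)
  next
    case False
    have "continuous_on K (\<lambda>x. \<bar>?\<tau> x - tbar\<bar>)"
      using tcont by (intro continuous_intros) (auto intro: continuous_on_subset)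
    then obtain x0 where x0: "x0 \<in> K" "\<forall>y\<in>K. \<bar>?\<tau> x0 - tbar\<bar> \<le> \<bar>?\<tau> y - tbar\<bar>"
      using continuous_attains_inf[OF K(1) False] by blast
    define \<delta> where "\<delta> = \<bar>?\<tau> x0 - tbar\<bar>"
    have d0: "\<delta> > 0" using x0(1) K(2) by (auto simp: \<delta>_def)
    obtain N where N: "\<forall>n\<ge>N. norm (t n - tbar) < \<delta>" using tlim d0 LIMSEQ_iff by blast
    have ev: "\<forall>\<^sub>F n in sequentially. \<forall>x\<in>K.
        (if ?\<tau> x < t n then (0::real) else 1) = (if ?\<tau> x < tbar then 0 else 1)"
    proof (rule eventually_sequentiallyI[of N])
      fix n assume n: "N \<le> n"
      show "\<forall>x\<in>K. (if ?\<tau> x < t n then (0::real) else 1) = (if ?\<tau> x < tbar then 0 else 1)"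
      proof
        fix x assume x: "x \<in> K"
        have "\<delta> \<le> \<bar>?\<tau> x - tbar\<bar>" using x0(2) x by (simp add: \<delta>_def)
        moreover have "\<bar>t n - tbar\<bar> < \<delta>" using N n by simp
        ultimately have "(?\<tau> x < t n) = (?\<tau> x < tbar)" by linarith
        then show "(if ?\<tau> x < t n then (0::real) else 1) = (if ?\<tau> x < tbar then 0 else 1)" by simp
      qed
    qed
    show ?thesis unfolding uniform_limit_iff
    proof (intro allI impI)
      fix e :: real assume e: "e > 0"
      show "\<forall>\<^sub>F n in sequentially. \<forall>x\<in>K. dist (if ?\<tau> x < t n then (0::real) else 1)
              (if ?\<tau> x < tbar then 0 else 1) < e"
        using ev by eventually_elim (use e in simp)
    qed
  qed
  show ?thesis using tlim unif by blast
qed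

end
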